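(* Let $(\mathcal C,\langle\cdot,\cdot\rangle_{\mathcal C})$ be a complex Hilbert space, let $0<r<r_0<1$ and $R=1/r$, and let $\Phi$ be an $\mathbf L(\mathcal C,\mathcal C)$-valued function analytic in $\{|z|<r_0\}$ and continuous on $\{|z|\le r_0\}$ in the operator topology. Put $M=\max_{|z|\le r_0}\|\Phi(z)\|$ and \[ C_\Phi(a,b)=\frac{\Phi(a)+\Phi(b)^*}{1-a\overline{b}},\qquad |a|,|b|\le r_0 . \] For $f,g$ in $\mathbf H_{2,r}^-(\mathcal C)$, $f(z)=\sum_{u\ge1}f_uz^{-u}$, $g(z)=\sum_{u\ge1}g_uz^{-u}$, define \[ [f,g]_{\Phi}=\frac{1}{4\pi^2}\iint_{\substack{|a|=r\\|b|=r}}\left\langle C_\Phi(a,b)f(a),g(b)\right\rangle_{\mathcal C}\,da\,d\overline{b}. \] Then \[ |[f,g]_{\Phi}|\le \frac{2Mr_0^2}{(1-r_0^2)^2}\left(\sum_{u=1}^\infty R^{2u}\|f_u\|_{\mathcal C}^2\right)^{1/2}\left(\sum_{u=1}^\infty R^{2u}\|g_u\|_{\mathcal C}^2\right)^{1/2}, \] and in particular $[\cdot,\cdot]_\Phi$ is jointly continuous with respect to the topology of $\mathbf H_{2,r}^-(\mathcal C)$.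
   Context: $\mathbf H_{2,r}^-(\mathcal C)$ is the Hilbert space of power series $f(z)=\sum_{u=1}^\infty f_u z^{-u}$, $f_u\in\mathcal C$, with $\sum_{u=1}^\infty R^{2u}\|f_u\|_{\mathcal C}^2<\infty$ and inner product $\langle f,g\rangle=\sum_{u\ge1}R^{2u}\langle f_u,g_u\rangle_{\mathcal C}$. On the circle $|a|=r$, $f(a)$ denotes the sum of the series $\sum_u f_ua^{-u}$ (convergent in $L^2$ of the circle). The integral is an iterated complex contour integral over the circles $|a|=r$ and $|b|=r$, with $d\overline{b}$ the conjugate of $db$ (so for $b=re^{i\varphi}$, $d\overline{b}=-i\overline{b}\,d\varphi$, and for $a=re^{i\theta}$, $da=ia\,d\theta$). *)

theory Defs
  imports "HOL-Analysis.Analysis" "HOL-Complex_Analysis.Contour_Integration"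
begin

text \<open>The distribution has no complex inner product spaces, so we introduce a type class:
  a real Banach space equipped with a complex scalar multiplication (compatible with the
  real one) and a complex inner product (linear in the first argument, conjugate symmetric)
  inducing the norm.\<close>

class complex_inner = banach +
  fixes scaleC :: "complex \<Rightarrow> 'a \<Rightarrow> 'a" (infixr "*\<^sub>C" 75)
    and cinner :: "'a \<Rightarrow> 'a \<Rightarrow> complex"
  assumes scaleC_add_right: "a *\<^sub>C (x + y) = a *\<^sub>C x + a *\<^sub>C y"
    and scaleC_add_left: "(a + b) *\<^sub>C x = a *\<^sub>C x + b *\<^sub>C x"
    and scaleC_scaleC: "a *\<^sub>C (b *\<^sub>C x) = (a * b) *\<^sub>C x"
    and scaleC_one: "1 *\<^sub>C x = x"
    and scaleC_of_real: "complex_of_real t *\<^sub>C x = t *\<^sub>R x"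
    and cinner_commute: "cinner x y = cnj (cinner y x)"
    and cinner_add_left: "cinner (x + y) z = cinner x z + cinner y z"
    and cinner_scaleC_left: "cinner (a *\<^sub>C x) y = a * cinner x y"
    and cinner_self_norm: "cinner x x = complex_of_real ((norm x)\<^sup>2)"

definition bounded_clinear :: "('a::complex_inner \<Rightarrow> 'b::complex_inner) \<Rightarrow> bool" where
  "bounded_clinear T \<longleftrightarrow>
     (\<forall>x y. T (x + y) = T x + T y) \<and> (\<forall>c x. T (c *\<^sub>C x) = c *\<^sub>C T x) \<and>
     (\<exists>K. \<forall>x. norm (T x) \<le> norm x * K)"

definition adjoint :: "('a::complex_inner \<Rightarrow> 'a) \<Rightarrow> 'a \<Rightarrow> 'a" where
  "adjoint T = (THE S. \<forall>x y. cinner (S x) y = cinner x (T y))"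

definition op_continuous_on :: "complex set \<Rightarrow> (complex \<Rightarrow> 'a::complex_inner \<Rightarrow> 'a) \<Rightarrow> bool" where
  "op_continuous_on S \<Phi> \<longleftrightarrow>
     (\<forall>z\<in>S. ((\<lambda>w. onorm (\<lambda>x. \<Phi> w x - \<Phi> z x)) \<longlongrightarrow> 0) (at z within S))"

definition op_holomorphic_on :: "complex set \<Rightarrow> (complex \<Rightarrow> 'a::complex_inner \<Rightarrow> 'a) \<Rightarrow> bool" where
  "op_holomorphic_on S \<Phi> \<longleftrightarrow>
     (\<forall>z\<in>S. \<exists>D. bounded_clinear D \<and>
        ((\<lambda>w. onorm (\<lambda>x. \<Phi> w x - \<Phi> z x - (w - z) *\<^sub>C D x) / cmod (w - z)) \<longlongrightarrow> 0) (at z))"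

text \<open>A series f(z) = sum_{u>=1} f_u z^{-u} is given by its coefficients c :: nat => 'a;
  the value c 0 is irrelevant (never used).\<close>

definition in_H2minus :: "real \<Rightarrow> (nat \<Rightarrow> 'a::complex_inner) \<Rightarrow> bool" where
  "in_H2minus r c \<longleftrightarrow> summable (\<lambda>u. (1 / r) ^ (2 * Suc u) * (norm (c (Suc u)))\<^sup>2)"

text \<open>F is (a representative of) the L^2 sum on the circle |a| = r of the series
  sum_{u>=1} c_u a^{-u}: measurable, and the partial sums converge to it in L^2
  (circle parametrised by a = r e^{i theta}, theta in [0, 2 pi]).\<close>
definition circle_L2_sum :: "real \<Rightarrow> (nat \<Rightarrow> 'a::complex_inner) \<Rightarrow> (complex \<Rightarrow> 'a) \<Rightarrow> bool" where
  "circle_L2_sum r c F \<longleftrightarrow>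
     (\<lambda>\<theta>. F (complex_of_real r * cis \<theta>)) \<in> borel_measurable (restrict_space lborel {0..2*pi}) \<and>
     ((\<lambda>N. \<integral>\<^sup>+\<theta>\<in>{0..2*pi}. ennreal ((norm (F (complex_of_real r * cis \<theta>)
            - (\<Sum>u\<in>{1..N}. (inverse (complex_of_real r * cis \<theta>)) ^ u *\<^sub>C c u)))\<^sup>2) \<partial>lborel)
       \<longlonglongrightarrow> 0)"

definition C_kernel :: "(complex \<Rightarrow> 'a::complex_inner \<Rightarrow> 'a) \<Rightarrow> complex \<Rightarrow> complex \<Rightarrow> 'a \<Rightarrow> 'a" where
  "C_kernel \<Phi> a b x = inverse (1 - a * cnj b) *\<^sub>C (\<Phi> a x + adjoint (\<Phi> b) x)"

text \<open>[f,g]_Phi = 1/(4 pi^2) iint <C(a,b) f(a), g(b)> da d(conj b), as an iterated contour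
  integral over |a| = r (inner) and |b| = r (outer); integration against d(conj b) is
  expressed as  int h d(conj b) = conj (int (conj h) db).\<close>
definition form_bracket :: "(complex \<Rightarrow> 'a::complex_inner \<Rightarrow> 'a) \<Rightarrow> real \<Rightarrow> (complex \<Rightarrow> 'a) \<Rightarrow> (complex \<Rightarrow> 'a) \<Rightarrow> complex" where
  "form_bracket \<Phi> r F G =
     1 / (4 * complex_of_real (pi\<^sup>2)) *
     cnj (contour_integral (circlepath 0 r)
       (\<lambda>b. cnj (contour_integral (circlepath 0 r)
                  (\<lambda>a. cinner (C_kernel \<Phi> a b (F a)) (G b)))))"

end

theory Submission
  imports Defs
begin

lemma cinner_add_right: "cinner x (y + z) = cinner x y + cinner x z"
  by (metis cinner_commute cinner_add_left complex_cnj_add)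

lemma cinner_scaleC_right: "cinner x (a *\<^sub>C y) = cnj a * cinner x y"
  by (metis cinner_commute cinner_scaleC_left complex_cnj_mult)

lemma scaleC_zero_left: "0 *\<^sub>C (x::'a::complex_inner) = 0"
  using scaleC_of_real[of 0 x] by simp

lemma cinner_zero_left: "cinner 0 y = 0"
  by (metis scaleC_zero_left cinner_scaleC_left mult_zero_left)

lemma cinner_zero_right: "cinner x 0 = 0"
  by (metis cinner_commute cinner_zero_left complex_cnj_zero)

lemma scaleC_minus_one: "(-1) *\<^sub>C x = - x"
proof -
  have "x + (-1) *\<^sub>C x = (1 + (-1)) *\<^sub>C x"
    by (simp only: scaleC_add_left scaleC_one)
  also have "\<dots> = 0" using scaleC_zero_left by simp
  finally have "x + (-1) *\<^sub>C x = 0" .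
  then show ?thesis by (rule sym[OF minus_unique])
qed

lemma cinner_minus_left: "cinner (- x) y = - cinner x y"
proof -
  have "cinner (- x) y = cinner ((-1) *\<^sub>C x) y" by (simp only: scaleC_minus_one)
  also have "\<dots> = (-1) * cinner x y" by (rule cinner_scaleC_left)
  finally show ?thesis by simp
qed

lemma cinner_minus_right: "cinner x (- y) = - cinner x y"
proof -
  have "cinner x (- y) = cnj (cinner (- y) x)" by (rule cinner_commute)
  also have "\<dots> = - cnj (cinner y x)" by (simp add: cinner_minus_left)
  also have "\<dots> = - cinner x y" by (simp add: cinner_commute[of x y])
  finally show ?thesis .
qed

lemma cinner_diff_left: "cinner (x - y) z = cinner x z - cinner y z"
  by (simp only: diff_conv_add_uminus cinner_add_left cinner_minus_left)

lemma cinner_diff_right: "cinner x (y - z) = cinner x y - cinner x z"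
  by (simp only: diff_conv_add_uminus cinner_add_right cinner_minus_right)

lemma cinner_sum_left: "cinner (\<Sum>i\<in>A. f i) y = (\<Sum>i\<in>A. cinner (f i) y)"
  by (induction A rule: infinite_finite_induct) (simp_all add: cinner_zero_left cinner_add_left)

lemma cinner_sum_right: "cinner x (\<Sum>i\<in>A. f i) = (\<Sum>i\<in>A. cinner x (f i))"
  by (induction A rule: infinite_finite_induct) (simp_all add: cinner_zero_right cinner_add_right)

lemma mcnj: "c * cnj c = (complex_of_real (cmod c))^2" by (metis complex_norm_square of_real_power)
lemma mcnj': "cnj c * c = (complex_of_real (cmod c))^2" by (metis mcnj mult.commute)

lemma norm_scaleC: "norm (a *\<^sub>C x) = cmod a * norm x"
proof -
  have "cinner (a *\<^sub>C x) (a *\<^sub>C x) = (a * cnj a) * cinner x x"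
    by (simp add: cinner_scaleC_left cinner_scaleC_right)
  also have "a * cnj a = complex_of_real ((cmod a)\<^sup>2)"
    by (simp add: mcnj)
  finally have "complex_of_real ((norm (a *\<^sub>C x))\<^sup>2) = complex_of_real ((cmod a * norm x)\<^sup>2)"
    by (simp only: cinner_self_norm of_real_mult[symmetric] power_mult_distrib)
  then have "(norm (a *\<^sub>C x))\<^sup>2 = (cmod a * norm x)\<^sup>2"
    by (simp only: of_real_eq_iff)
  then show ?thesis
    by (rule power2_eq_imp_eq) simp_all
qed

lemma cinner_Cauchy_Schwarz: "cmod (cinner x y) \<le> norm x * norm y"
proof (cases "y = 0")
  case True then show ?thesis by (simp add: cinner_zero_right)
next
  case False
  define n where "n = (norm y)\<^sup>2"
  define c where "c = cinner x y"
  have n: "n > 0" using False by (simp add: n_def)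
  define t where "t = c / complex_of_real n"
  have "cinner (x - t *\<^sub>C y) (x - t *\<^sub>C y) = cinner x x - cnj t * c - t * cnj c + t * cnj t * cinner y y"
    by (simp add: cinner_diff_left cinner_diff_right cinner_scaleC_left cinner_scaleC_right
         c_def cinner_commute[of y x] algebra_simps)
  also have "cinner y y = complex_of_real n" by (simp add: n_def cinner_self_norm)
  also have "cnj t * c = complex_of_real ((cmod c)\<^sup>2 / n)" using n by (simp add: t_def mcnj mcnj')
  also have "t * cnj c = complex_of_real ((cmod c)\<^sup>2 / n)" using n by (simp add: t_def mcnj mcnj')
  also have "t * cnj t * complex_of_real n = complex_of_real ((cmod c)\<^sup>2 / n)"
    using n by (simp add: t_def mcnj mcnj' power2_eq_square)
  finally have "complex_of_real ((norm (x - t *\<^sub>C y))\<^sup>2) = complex_of_real ((norm x)\<^sup>2 - (cmod c)\<^sup>2 / n)"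
    by (simp add: cinner_self_norm)
  then have "(norm (x - t *\<^sub>C y))\<^sup>2 = (norm x)\<^sup>2 - (cmod c)\<^sup>2 / n"
    by (simp only: of_real_eq_iff)
  then have "(norm x)\<^sup>2 - (cmod c)\<^sup>2 / n \<ge> 0"
    by (metis zero_le_power2)
  then have "(cmod c)\<^sup>2 \<le> (norm x)\<^sup>2 * n"
    using n by (simp add: field_simps)
  also have "\<dots> = (norm x * norm y)\<^sup>2" by (simp add: n_def power_mult_distrib)
  finally have A: "(cmod c)\<^sup>2 \<le> (norm x * norm y)\<^sup>2" .
  show ?thesis unfolding c_def[symmetric] by (rule power2_le_imp_le[OF A]) simp
qed


lemma parallelogram:
  fixes x y :: "'a::complex_inner"
  shows "(norm (x + y))\<^sup>2 + (norm (x - y))\<^sup>2 = 2 * (norm x)\<^sup>2 + 2 * (norm y)\<^sup>2"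
proof -
  have "complex_of_real ((norm (x + y))\<^sup>2 + (norm (x - y))\<^sup>2)
      = cinner (x + y) (x + y) + cinner (x - y) (x - y)"
    by (simp only: of_real_add cinner_self_norm)
  also have "\<dots> = 2 * cinner x x + 2 * cinner y y"
    by (simp add: cinner_add_left cinner_add_right cinner_diff_left cinner_diff_right)
  also have "\<dots> = complex_of_real (2 * (norm x)\<^sup>2 + 2 * (norm y)\<^sup>2)"
    by (simp add: cinner_self_norm)
  finally show ?thesis by (simp only: of_real_eq_iff)
qed

lemma norm_sq_add_scaleC:
  fixes z n :: "'a::complex_inner"
  shows "complex_of_real ((norm (z + t *\<^sub>C n))\<^sup>2)
     = cinner z z + cnj t * cinner z n + t * cinner n z + t * cnj t * cinner n n"
  unfolding cinner_self_norm[symmetric]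
  by (simp add: cinner_add_left cinner_add_right cinner_scaleC_left cinner_scaleC_right algebra_simps)

lemma mcnj3: "complex_of_real (cmod c) * complex_of_real (cmod c) = c * cnj c"
  by (metis mcnj power2_eq_square)

lemma riesz:
  fixes \<phi> :: "'a::complex_inner \<Rightarrow> complex"
  assumes add: "\<And>x y. \<phi> (x + y) = \<phi> x + \<phi> y"
    and scal: "\<And>c x. \<phi> (c *\<^sub>C x) = c * \<phi> x"
    and bnd: "\<And>x. cmod (\<phi> x) \<le> K * norm x"
  shows "\<exists>w. \<forall>y. \<phi> y = cinner y w"
proof (cases "\<forall>y. \<phi> y = 0")
  case True
  then show ?thesis by (intro exI[of _ 0]) (simp add: cinner_zero_right)
next
  case False
  have phi0: "\<phi> 0 = 0" using add[of 0 0] by simp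
  have phidiff: "\<phi> (x - y) = \<phi> x - \<phi> y" for x y
    using add[of "x - y" y] by simp
  have phiR: "\<phi> (t *\<^sub>R x) = complex_of_real t * \<phi> x" for t x
    using scal[of "complex_of_real t" x] by (simp add: scaleC_of_real)
  from False obtain x0 where x0: "\<phi> x0 \<noteq> 0" by blast
  define x1 where "x1 = (1 / \<phi> x0) *\<^sub>C x0"
  have x1: "\<phi> x1 = 1" using x0 by (simp add: x1_def scal)
  define A where "A = {x. \<phi> x = 1}"
  define d2 where "d2 = Inf ((\<lambda>x. (norm x)\<^sup>2) ` A)"
  have Ane: "(\<lambda>x. (norm x)\<^sup>2) ` A \<noteq> {}" using x1 by (auto simp: A_def)
  have bdd: "bdd_below ((\<lambda>x. (norm x)\<^sup>2) ` A)"
    by (rule bdd_belowI[of _ 0]) auto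
  have lower: "d2 \<le> (norm x)\<^sup>2" if "x \<in> A" for x
    unfolding d2_def using bdd that by (intro cInf_lower) auto
  have "\<exists>x\<in>A. (norm x)\<^sup>2 < d2 + inverse (real (Suc n))" for n
  proof -
    have "Inf ((\<lambda>x. (norm x)\<^sup>2) ` A) < d2 + inverse (real (Suc n))"
      unfolding d2_def by simp
    from cInf_lessD[OF Ane this] show ?thesis by blast
  qed
  then obtain xs where xsA: "\<And>n. xs n \<in> A"
    and xsn: "\<And>n. (norm (xs n))\<^sup>2 < d2 + inverse (real (Suc n))"
    by metis
  have mid: "4 * d2 \<le> (norm (x + y))\<^sup>2" if "x \<in> A" "y \<in> A" for x y
  proof -
    have "(1/2::real) *\<^sub>R (x + y) \<in> A"
      using that by (simp add: A_def phiR add)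
    then have "d2 \<le> (norm ((1/2::real) *\<^sub>R (x + y)))\<^sup>2" by (rule lower)
    also have "\<dots> = (norm (x + y))\<^sup>2 / 4"
      by (simp add: power2_eq_square)
    finally show ?thesis by simp
  qed
  have diffbound: "(norm (xs m - xs n))\<^sup>2 \<le> 2 * inverse (real (Suc m)) + 2 * inverse (real (Suc n))" for m n
  proof -
    have "(norm (xs m - xs n))\<^sup>2 = 2 * (norm (xs m))\<^sup>2 + 2 * (norm (xs n))\<^sup>2 - (norm (xs m + xs n))\<^sup>2"
      using parallelogram[of "xs m" "xs n"] by simp
    also have "\<dots> \<le> 2 * (d2 + inverse (real (Suc m))) + 2 * (d2 + inverse (real (Suc n))) - 4 * d2"
      using xsn[of m] xsn[of n] mid[OF xsA xsA, of m n] by simp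
    finally show ?thesis by simp
  qed
  have "Cauchy xs"
  proof (rule metric_CauchyI)
    fix e :: real assume e: "e > 0"
    obtain N where N: "4 / e\<^sup>2 < real N" using reals_Archimedean2 by blast
    have Npos: "real N > 0" using N e by (smt (verit) divide_pos_pos zero_less_power)
    show "\<exists>M. \<forall>m\<ge>M. \<forall>n\<ge>M. dist (xs m) (xs n) < e"
    proof (intro exI allI impI)
      fix m n assume mN: "N \<le> m" and nN: "N \<le> n"
      have "inverse (real (Suc m)) \<le> inverse (real N)"
        using mN Npos by (simp add: le_imp_inverse_le)
      moreover have "inverse (real (Suc n)) \<le> inverse (real N)"
        using nN Npos by (simp add: le_imp_inverse_le)
      ultimately have "(norm (xs m - xs n))\<^sup>2 \<le> 4 * inverse (real N)"
        using diffbound[of m n] by simp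
      also have "\<dots> < e\<^sup>2"
        using N e Npos by (simp add: field_simps)
      finally have "(norm (xs m - xs n))\<^sup>2 < e\<^sup>2" .
      then have "norm (xs m - xs n) < e"
        using e by (simp add: power_less_imp_less_base)
      then show "dist (xs m) (xs n) < e" by (simp add: dist_norm)
    qed
  qed
  then obtain z where z: "xs \<longlonglongrightarrow> z"
    using Cauchy_convergent_iff convergent_def by blast
  have "cmod (1 - \<phi> z) \<le> 0"
  proof (rule LIMSEQ_le_const)
    have "(\<lambda>n. norm (xs n - z)) \<longlonglongrightarrow> 0"
      using z by (simp add: tendsto_norm_zero_iff LIM_zero_iff)
    then show "(\<lambda>n. K * norm (xs n - z)) \<longlonglongrightarrow> 0"
      by (simp add: tendsto_mult_right_zero)
    show "\<exists>N. \<forall>n\<ge>N. cmod (1 - \<phi> z) \<le> K * norm (xs n - z)"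
    proof (intro exI allI impI)
      fix n
      have "1 - \<phi> z = \<phi> (xs n - z)" using xsA[of n] by (simp add: A_def phidiff)
      then show "cmod (1 - \<phi> z) \<le> K * norm (xs n - z)" using bnd by simp
    qed
  qed
  then have zA: "\<phi> z = 1" by simp
  have zmin: "(norm z)\<^sup>2 \<le> (norm x)\<^sup>2" if "x \<in> A" for x
  proof -
    have "(norm z)\<^sup>2 \<le> d2"
    proof (rule LIMSEQ_le)
      show "(\<lambda>n. (norm (xs n))\<^sup>2) \<longlonglongrightarrow> (norm z)\<^sup>2"
        by (intro tendsto_intros z)
      show "(\<lambda>n. d2 + inverse (real (Suc n))) \<longlonglongrightarrow> d2"
        using tendsto_add[OF tendsto_const LIMSEQ_inverse_real_of_nat, of d2] by simp
      show "\<exists>N. \<forall>n\<ge>N. (norm (xs n))\<^sup>2 \<le> d2 + inverse (real (Suc n))"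
        using xsn less_imp_le by blast
    qed
    also have "\<dots> \<le> (norm x)\<^sup>2" using lower that by blast
    finally show ?thesis .
  qed
  have orth: "cinner n z = 0" if n0: "\<phi> n = 0" for n
  proof (rule ccontr)
    assume ne: "cinner n z \<noteq> 0"
    define c where "c = cinner z n"
    have cne: "c \<noteq> 0" using ne by (metis c_def cinner_commute complex_cnj_zero)
    define s where "s = 1 / ((norm n)\<^sup>2 + 1)"
    have npos: "(norm n)\<^sup>2 + 1 > 0" by (smt (verit) zero_le_power2)
    have s: "s > 0" using npos by (simp add: s_def)
    define t where "t = - (complex_of_real s * c)"
    have "z + t *\<^sub>C n \<in> A" using zA n0 by (simp add: A_def add scal)
    then have le: "(norm z)\<^sup>2 \<le> (norm (z + t *\<^sub>C n))\<^sup>2" by (rule zmin)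
    have nz: "cinner n z = cnj c" by (simp add: c_def cinner_commute[of n z])
    have "complex_of_real ((norm (z + t *\<^sub>C n))\<^sup>2)
        = complex_of_real ((norm z)\<^sup>2 - 2 * s * (cmod c)\<^sup>2 + s\<^sup>2 * (cmod c)\<^sup>2 * (norm n)\<^sup>2)"
    proof -
      have "complex_of_real ((norm (z + t *\<^sub>C n))\<^sup>2)
          = complex_of_real ((norm z)\<^sup>2) - 2 * complex_of_real s * (c * cnj c)
            + (complex_of_real s)\<^sup>2 * (c * cnj c) * complex_of_real ((norm n)\<^sup>2)"
        unfolding norm_sq_add_scaleC nz c_def[symmetric] t_def complex_cnj_minus complex_cnj_mult
          complex_cnj_complex_of_real
        unfolding cinner_self_norm[symmetric]
        by (simp add: algebra_simps power2_eq_square)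
      also have "\<dots> = complex_of_real ((norm z)\<^sup>2 - 2 * s * (cmod c)\<^sup>2 + s\<^sup>2 * (cmod c)\<^sup>2 * (norm n)\<^sup>2)"
        unfolding complex_norm_square[symmetric] by simp
      finally show ?thesis .
    qed
    then have eq: "(norm (z + t *\<^sub>C n))\<^sup>2 = (norm z)\<^sup>2 - 2 * s * (cmod c)\<^sup>2 + s\<^sup>2 * (cmod c)\<^sup>2 * (norm n)\<^sup>2"
      by (simp only: of_real_eq_iff)
    have cpos: "(cmod c)\<^sup>2 > 0" using cne by simp
    from le eq have "0 \<le> (s\<^sup>2 * (norm n)\<^sup>2 - 2 * s) * (cmod c)\<^sup>2"
      by (simp add: algebra_simps)
    then have "0 \<le> s\<^sup>2 * (norm n)\<^sup>2 - 2 * s"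
      using cpos by (simp add: zero_le_mult_iff)
    then have "2 * s \<le> s\<^sup>2 * (norm n)\<^sup>2" by simp
    then have "2 \<le> s * (norm n)\<^sup>2"
      using s by (simp add: power2_eq_square)
    moreover have "s * (norm n)\<^sup>2 < 1"
      using npos by (simp add: s_def field_simps)
    ultimately show False by simp
  qed
  have znz: "z \<noteq> 0" using zA phi0 by auto
  define w where "w = complex_of_real (1 / (norm z)\<^sup>2) *\<^sub>C z"
  show ?thesis
  proof (intro exI allI)
    fix y
    have "\<phi> (y - \<phi> y *\<^sub>C z) = 0" by (simp add: phidiff scal zA)
    then have "cinner (y - \<phi> y *\<^sub>C z) z = 0" by (rule orth)
    then have "cinner y z = \<phi> y * complex_of_real ((norm z)\<^sup>2)"
      by (simp add: cinner_diff_left cinner_scaleC_left cinner_self_norm)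
    then show "\<phi> y = cinner y w"
      using znz by (simp add: w_def cinner_scaleC_right)
  qed
qed


lemma bclin_linear:
  fixes T :: "'a::complex_inner \<Rightarrow> 'b::complex_inner"
  assumes "bounded_clinear T" shows "bounded_linear T"
proof -
  from assms obtain K where add: "\<And>x y. T (x + y) = T x + T y"
    and sc: "\<And>c x. T (c *\<^sub>C x) = c *\<^sub>C T x" and b: "\<And>x. norm (T x) \<le> norm x * K"
    unfolding bounded_clinear_def by blast
  show ?thesis
  proof (rule bounded_linear_intro[OF add _ b])
    fix r x
    show "T (r *\<^sub>R x) = r *\<^sub>R T x"
      using sc[of "complex_of_real r" x] by (simp only: scaleC_of_real)
  qed
qed

lemma adjoint_ex:
  fixes T :: "'a::complex_inner \<Rightarrow> 'a"
  assumes T: "bounded_clinear T"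
  shows "\<exists>S. \<forall>x y. cinner (S x) y = cinner x (T y)"
proof -
  from T have add: "\<And>x y. T (x + y) = T x + T y"
    and sc: "\<And>c x. T (c *\<^sub>C x) = c *\<^sub>C T x"
    unfolding bounded_clinear_def by blast+
  have bl: "bounded_linear T" using T by (rule bclin_linear)
  have "\<exists>w. \<forall>y. cinner w y = cinner x (T y)" for x
  proof -
    have "\<exists>w. \<forall>y. cinner (T y) x = cinner y w"
    proof (rule riesz)
      show "cinner (T (y1 + y2)) x = cinner (T y1) x + cinner (T y2) x" for y1 y2
        by (simp add: add cinner_add_left)
      show "cinner (T (c *\<^sub>C y)) x = c * cinner (T y) x" for c y
        by (simp add: sc cinner_scaleC_left)
      show "cmod (cinner (T y) x) \<le> (onorm T * norm x) * norm y" for y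
      proof -
        have "cmod (cinner (T y) x) \<le> norm (T y) * norm x" by (rule cinner_Cauchy_Schwarz)
        also have "\<dots> \<le> (onorm T * norm y) * norm x"
          by (rule mult_right_mono[OF onorm[OF bl] norm_ge_zero])
        finally show ?thesis by (simp add: algebra_simps)
      qed
    qed
    then obtain w where w: "\<And>y. cinner (T y) x = cinner y w" by blast
    show ?thesis
    proof (intro exI allI)
      fix y
      have "cinner w y = cnj (cinner y w)" by (rule cinner_commute)
      also have "\<dots> = cnj (cinner (T y) x)" by (simp add: w)
      also have "\<dots> = cinner x (T y)" by (simp add: cinner_commute[of x "T y"])
      finally show "cinner w y = cinner x (T y)" .
    qed
  qed
  then show ?thesis by metis
qed

lemma adjoint_prop:
  fixes T :: "'a::complex_inner \<Rightarrow> 'a"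
  assumes T: "bounded_clinear T"
  shows "cinner (adjoint T x) y = cinner x (T y)"
proof -
  obtain S where S: "\<And>x y. cinner (S x) y = cinner x (T y)" using adjoint_ex[OF T] by blast
  have uniq: "S' = S" if S': "\<forall>x y. cinner (S' x) y = cinner x (T y)" for S'
  proof
    fix x
    have "cinner (S' x - S x) (S' x - S x) = 0"
      using S' by (simp add: cinner_diff_left S)
    then have "complex_of_real ((norm (S' x - S x))\<^sup>2) = 0" by (simp only: cinner_self_norm)
    then show "S' x = S x" by simp
  qed
  have "adjoint T = S"
    unfolding adjoint_def
  proof (rule the_equality)
    show "\<forall>x y. cinner (S x) y = cinner x (T y)" using S by blast
    show "S' = S" if "\<forall>x y. cinner (S' x) y = cinner x (T y)" for S' using uniq that by blast
  qed
  then show ?thesis using S by simp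
qed

lemma adjoint_norm:
  fixes T :: "'a::complex_inner \<Rightarrow> 'a"
  assumes T: "bounded_clinear T"
  shows "norm (adjoint T x) \<le> onorm T * norm x"
proof -
  have bl: "bounded_linear T" using T by (rule bclin_linear)
  define v where "v = adjoint T x"
  show ?thesis
  proof (cases "v = 0")
    case True then show ?thesis
      using onorm_pos_le[OF bl] by (simp add: v_def[symmetric])
  next
    case False
    have "(norm v)\<^sup>2 = cmod (complex_of_real ((norm v)\<^sup>2))"
      by (metis abs_of_nonneg norm_of_real zero_le_power2)
    also have "\<dots> = cmod (cinner v v)" by (simp only: cinner_self_norm)
    also have "\<dots> = cmod (cinner x (T v))" by (simp add: v_def adjoint_prop[OF T])
    also have "\<dots> \<le> norm x * norm (T v)" by (rule cinner_Cauchy_Schwarz)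
    also have "\<dots> \<le> norm x * (onorm T * norm v)"
      by (rule mult_left_mono[OF onorm[OF bl] norm_ge_zero])
    finally have "norm v * norm v \<le> (onorm T * norm x) * norm v"
      by (simp add: power2_eq_square algebra_simps)
    then have "norm v \<le> onorm T * norm x"
      using False by simp
    then show ?thesis by (simp add: v_def)
  qed
qed

lemma onorm_cont_bdd:
  fixes \<Phi> :: "complex \<Rightarrow> 'a::complex_inner \<Rightarrow> 'a"
  assumes cont: "op_continuous_on S \<Phi>" and S: "compact S"
    and bl: "\<forall>z\<in>S. bounded_clinear (\<Phi> z)"
  shows "bdd_above ((\<lambda>z. onorm (\<Phi> z)) ` S)"
proof -
  have "continuous_on S (\<lambda>z. onorm (\<Phi> z))"
    unfolding continuous_on_def
  proof
    fix x assume xS: "x \<in> S"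
    have lim: "((\<lambda>w. onorm (\<lambda>v. \<Phi> w v - \<Phi> x v)) \<longlongrightarrow> 0) (at x within S)"
      using cont xS unfolding op_continuous_on_def by blast
    have ev: "eventually (\<lambda>w. norm (onorm (\<Phi> w) - onorm (\<Phi> x)) \<le> onorm (\<lambda>v. \<Phi> w v - \<Phi> x v)) (at x within S)"
    proof -
      have "eventually (\<lambda>w. w \<in> S) (at x within S)"
        by (simp add: eventually_at_filter)
      then show ?thesis
      proof (rule eventually_mono)
        fix w assume wS: "w \<in> S"
        have bw: "bounded_linear (\<Phi> w)" using bl wS bclin_linear by blast
        have bx: "bounded_linear (\<Phi> x)" using bl xS bclin_linear by blast
        have bwx: "bounded_linear (\<lambda>v. \<Phi> w v - \<Phi> x v)" using bw bx by (rule bounded_linear_sub)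
        have bxw: "bounded_linear (\<lambda>v. \<Phi> x v - \<Phi> w v)" using bx bw by (rule bounded_linear_sub)
        have "onorm (\<lambda>v. (\<Phi> w v - \<Phi> x v) + \<Phi> x v) \<le> onorm (\<lambda>v. \<Phi> w v - \<Phi> x v) + onorm (\<Phi> x)"
          by (rule onorm_triangle[OF bwx bx])
        then have 1: "onorm (\<Phi> w) \<le> onorm (\<lambda>v. \<Phi> w v - \<Phi> x v) + onorm (\<Phi> x)" by simp
        have "onorm (\<lambda>v. (\<Phi> x v - \<Phi> w v) + \<Phi> w v) \<le> onorm (\<lambda>v. \<Phi> x v - \<Phi> w v) + onorm (\<Phi> w)"
          by (rule onorm_triangle[OF bxw bw])
        moreover have "onorm (\<lambda>v. \<Phi> x v - \<Phi> w v) = onorm (\<lambda>v. \<Phi> w v - \<Phi> x v)"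
          using onorm_neg[of "\<lambda>v. \<Phi> w v - \<Phi> x v"] by simp
        ultimately have 2: "onorm (\<Phi> x) \<le> onorm (\<lambda>v. \<Phi> w v - \<Phi> x v) + onorm (\<Phi> w)" by simp
        from 1 2 show "norm (onorm (\<Phi> w) - onorm (\<Phi> x)) \<le> onorm (\<lambda>v. \<Phi> w v - \<Phi> x v)"
          by simp
      qed
    qed
    have "((\<lambda>w. onorm (\<Phi> w) - onorm (\<Phi> x)) \<longlongrightarrow> 0) (at x within S)"
      by (rule Lim_null_comparison[OF ev lim])
    then show "((\<lambda>z. onorm (\<Phi> z)) \<longlongrightarrow> onorm (\<Phi> x)) (at x within S)"
      by (rule LIM_zero_cancel)
  qed
  then have "compact ((\<lambda>z. onorm (\<Phi> z)) ` S)" using S by (rule compact_continuous_image)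
  then show ?thesis by (intro bounded_imp_bdd_above compact_imp_bounded)
qed

lemma kernel_bound:
  fixes \<Phi> :: "complex \<Rightarrow> 'a::complex_inner \<Rightarrow> 'a"
  assumes ba: "bounded_clinear (\<Phi> a)" and bb: "bounded_clinear (\<Phi> b)"
    and Ma: "onorm (\<Phi> a) \<le> M" and Mb: "onorm (\<Phi> b) \<le> M"
    and ar: "cmod a = r" and br: "cmod b = r" and r: "0 \<le> r" "r < 1"
  shows "cmod (cinner (C_kernel \<Phi> a b x) y) \<le> 2 * M / (1 - r\<^sup>2) * norm x * norm y"
proof -
  have bla: "bounded_linear (\<Phi> a)" using ba by (rule bclin_linear)
  have r2: "r\<^sup>2 < 1" using power_strict_mono[of r 1 2] r by simp
  have "1 - cmod (a * cnj b) \<le> cmod (1 - a * cnj b)"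
    using norm_triangle_ineq2[of 1 "a * cnj b"] by simp
  moreover have "cmod (a * cnj b) = r\<^sup>2" using ar br by (simp add: norm_mult power2_eq_square)
  ultimately have den: "1 - r\<^sup>2 \<le> cmod (1 - a * cnj b)" by simp
  have dpos: "0 < 1 - r\<^sup>2" using r2 by simp
  have inv: "cmod (inverse (1 - a * cnj b)) \<le> 1 / (1 - r\<^sup>2)"
    unfolding norm_inverse divide_inverse mult_1_left
    by (rule le_imp_inverse_le[OF den dpos])
  have "norm (\<Phi> a x + adjoint (\<Phi> b) x) \<le> norm (\<Phi> a x) + norm (adjoint (\<Phi> b) x)"
    by (rule norm_triangle_ineq)
  also have "\<dots> \<le> onorm (\<Phi> a) * norm x + onorm (\<Phi> b) * norm x"
    by (rule add_mono[OF onorm[OF bla] adjoint_norm[OF bb]])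
  also have "\<dots> \<le> M * norm x + M * norm x"
    by (intro add_mono mult_right_mono Ma Mb norm_ge_zero)
  finally have sumb: "norm (\<Phi> a x + adjoint (\<Phi> b) x) \<le> 2 * M * norm x" by simp
  have "norm (C_kernel \<Phi> a b x) = cmod (inverse (1 - a * cnj b)) * norm (\<Phi> a x + adjoint (\<Phi> b) x)"
    by (simp add: C_kernel_def norm_scaleC)
  also have "\<dots> \<le> (1 / (1 - r\<^sup>2)) * (2 * M * norm x)"
    by (rule mult_mono[OF inv sumb]) (use dpos in simp_all)
  also have "\<dots> = 2 * M / (1 - r\<^sup>2) * norm x" by simp
  finally have Cb: "norm (C_kernel \<Phi> a b x) \<le> 2 * M / (1 - r\<^sup>2) * norm x" .
  have "cmod (cinner (C_kernel \<Phi> a b x) y) \<le> norm (C_kernel \<Phi> a b x) * norm y"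
    by (rule cinner_Cauchy_Schwarz)
  also have "\<dots> \<le> 2 * M / (1 - r\<^sup>2) * norm x * norm y"
    by (rule mult_right_mono[OF Cb norm_ge_zero])
  finally show ?thesis .
qed


lemma cis_int_integral:
  fixes k :: int
  shows "((\<lambda>\<theta>. cis (of_int k * \<theta>)) has_integral (if k = 0 then complex_of_real (2*pi) else 0)) {0..2*pi}"
proof (cases "k = 0")
  case True
  show ?thesis using True has_integral_const_real[of "1::complex" 0 "2*pi"]
    by (simp add: scaleR_conv_of_real)
next
  case False
  have kne: "(\<i> * of_int k :: complex) \<noteq> 0" using False by simp
  define G where "G = (\<lambda>x::real. exp (\<i> * of_int k * of_real x) / (\<i> * of_int k))"
  have d: "(G has_vector_derivative cis (of_int k * x)) (at x within {0..2*pi})" for x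
  proof -
    have "((\<lambda>z. exp (\<i> * of_int k * z) / (\<i> * of_int k)) has_field_derivative exp (\<i> * of_int k * of_real x)) (at (of_real x))"
      using kne by (auto intro!: derivative_eq_intros)
    from has_vector_derivative_real_field[OF this] show ?thesis
      unfolding G_def cis_conv_exp by (simp add: mult.assoc)
  qed
  have "((\<lambda>\<theta>. cis (of_int k * \<theta>)) has_integral G (2*pi) - G 0) {0..2*pi}"
    by (rule fundamental_theorem_of_calculus) (use d in auto)
  moreover have "G (2*pi) = G 0"
  proof -
    have "exp (\<i> * of_int k * of_real (2*pi)) = cis (2 * pi * of_int k)"
      by (simp add: cis_conv_exp mult_ac)
    also have "\<dots> = 1" by (simp add: cis.ctr cos_int_2pin sin_int_2pin complex_eq_iff)
    finally show ?thesis by (simp add: G_def)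
  qed
  ultimately show ?thesis using False by simp
qed

lemma w_pow:
  "(inverse (complex_of_real r * cis \<theta>)) ^ n = complex_of_real ((inverse r)^n) * cis (real n * (- \<theta>))"
  apply (simp only: inverse_mult_distrib cis_inverse power_mult_distrib of_real_power of_real_inverse)
  apply (simp add: Complex.DeMoivre)
  done

lemma w_prod:
  "(inverse (complex_of_real r * cis \<theta>)) ^ u * cnj ((inverse (complex_of_real r * cis \<theta>)) ^ v)
     = complex_of_real ((1/r)^(u+v)) * cis (of_int (int v - int u) * \<theta>)"
proof -
  have c: "cnj ((inverse (complex_of_real r * cis \<theta>)) ^ v) = complex_of_real ((inverse r)^v) * cis (real v * \<theta>)"
    unfolding w_pow complex_cnj_mult complex_cnj_complex_of_real cis_cnj by simp
  have "(inverse (complex_of_real r * cis \<theta>)) ^ u * cnj ((inverse (complex_of_real r * cis \<theta>)) ^ v)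
     = (complex_of_real ((inverse r)^u) * complex_of_real ((inverse r)^v)) * (cis (real u * (- \<theta>)) * cis (real v * \<theta>))"
    unfolding c unfolding w_pow by (simp only: mult_ac)
  also have "cis (real u * (- \<theta>)) * cis (real v * \<theta>) = cis (of_int (int v - int u) * \<theta>)"
    unfolding cis_mult by (simp add: algebra_simps)
  also have "complex_of_real ((inverse r)^u) * complex_of_real ((inverse r)^v) = complex_of_real ((1/r)^(u+v))"
    by (simp add: power_add divide_inverse)
  finally show ?thesis .
qed


lemma parseval_partial:
  fixes c :: "nat \<Rightarrow> 'a::complex_inner"
  assumes r: "r > 0"
  shows "((\<lambda>\<theta>. (norm (\<Sum>u\<in>{1..N}. (inverse (complex_of_real r * cis \<theta>)) ^ u *\<^sub>C c u))\<^sup>2)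
          has_integral 2 * pi * (\<Sum>u\<in>{1..N}. (1/r)^(2*u) * (norm (c u))\<^sup>2)) {0..2*pi}"
proof -
  define U where "U = {1..N}"
  have fU: "finite U" by (simp add: U_def)
  define w where "w = (\<lambda>u \<theta>. (inverse (complex_of_real r * cis \<theta>)) ^ u)"
  have ci: "cinner (\<Sum>u\<in>U. w u \<theta> *\<^sub>C c u) (\<Sum>u\<in>U. w u \<theta> *\<^sub>C c u)
      = (\<Sum>u\<in>U. \<Sum>v\<in>U. (complex_of_real ((1/r)^(u+v)) * cinner (c u) (c v)) * cis (of_int (int v - int u) * \<theta>))" for \<theta>
  proof -
    have "cinner (\<Sum>u\<in>U. w u \<theta> *\<^sub>C c u) (\<Sum>u\<in>U. w u \<theta> *\<^sub>C c u)
        = (\<Sum>u\<in>U. \<Sum>v\<in>U. (w u \<theta> * cnj (w v \<theta>)) * cinner (c u) (c v))"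
      apply (subst cinner_sum_left)
      apply (simp only: cinner_scaleC_left cinner_sum_right cinner_scaleC_right sum_distrib_left mult.assoc)
      apply (intro sum.cong refl)
      apply (simp only: mult.left_commute)
      done
    also have "\<dots> = (\<Sum>u\<in>U. \<Sum>v\<in>U. (complex_of_real ((1/r)^(u+v)) * cinner (c u) (c v)) * cis (of_int (int v - int u) * \<theta>))"
      unfolding w_def w_prod by (simp add: mult_ac)
    finally show ?thesis .
  qed
  have hi: "((\<lambda>\<theta>. cinner (\<Sum>u\<in>U. w u \<theta> *\<^sub>C c u) (\<Sum>u\<in>U. w u \<theta> *\<^sub>C c u)) has_integral
        (\<Sum>u\<in>U. \<Sum>v\<in>U. (complex_of_real ((1/r)^(u+v)) * cinner (c u) (c v)) *
            (if int v - int u = 0 then complex_of_real (2*pi) else 0))) {0..2*pi}"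
    unfolding ci
    by (intro has_integral_sum fU has_integral_mult_right cis_int_integral)
  have val: "(\<Sum>u\<in>U. \<Sum>v\<in>U. (complex_of_real ((1/r)^(u+v)) * cinner (c u) (c v)) *
            (if int v - int u = 0 then complex_of_real (2*pi) else 0))
        = complex_of_real (2 * pi * (\<Sum>u\<in>U. (1/r)^(2*u) * (norm (c u))\<^sup>2))"
  proof -
    have "(\<Sum>u\<in>U. \<Sum>v\<in>U. (complex_of_real ((1/r)^(u+v)) * cinner (c u) (c v)) *
            (if int v - int u = 0 then complex_of_real (2*pi) else 0))
        = (\<Sum>u\<in>U. \<Sum>v\<in>U. if v = u then (complex_of_real ((1/r)^(u+v)) * cinner (c u) (c v)) * complex_of_real (2*pi) else 0)"
      by (intro sum.cong refl) auto
    also have "\<dots> = (\<Sum>u\<in>U. (complex_of_real ((1/r)^(u+u)) * cinner (c u) (c u)) * complex_of_real (2*pi))"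
      by (simp add: fU)
    also have "\<dots> = (\<Sum>u\<in>U. complex_of_real (2 * pi * ((1/r)^(2*u) * (norm (c u))\<^sup>2)))"
      by (intro sum.cong refl) (simp only: cinner_self_norm of_real_mult mult_2[symmetric] mult_ac)
    also have "\<dots> = complex_of_real (2 * pi * (\<Sum>u\<in>U. (1/r)^(2*u) * (norm (c u))\<^sup>2))"
      by (simp add: sum_distrib_left)
    finally show ?thesis .
  qed
  have "((\<lambda>\<theta>. Re (cinner (\<Sum>u\<in>U. w u \<theta> *\<^sub>C c u) (\<Sum>u\<in>U. w u \<theta> *\<^sub>C c u))) has_integral
        Re (complex_of_real (2 * pi * (\<Sum>u\<in>U. (1/r)^(2*u) * (norm (c u))\<^sup>2)))) {0..2*pi}"
    using has_integral_Re[OF hi] unfolding val .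
  then show ?thesis
    unfolding U_def w_def by (simp only: cinner_self_norm Re_complex_of_real)
qed


lemma floor_approx:
  fixes x :: real
  shows "(\<lambda>m. of_int \<lfloor>real (Suc m) * x\<rfloor> / real (Suc m)) \<longlonglongrightarrow> x"
proof -
  have "(\<lambda>m. of_int \<lfloor>real (Suc m) * x\<rfloor> / real (Suc m) - x) \<longlonglongrightarrow> 0"
  proof (rule Lim_null_comparison)
    show "\<forall>\<^sub>F m in sequentially. norm (of_int \<lfloor>real (Suc m) * x\<rfloor> / real (Suc m) - x) \<le> inverse (real (Suc m))"
    proof (rule always_eventually, rule allI)
      fix m
      define k where "k = real (Suc m)"
      have k: "k > 0" by (simp add: k_def)
      have 1: "of_int \<lfloor>k * x\<rfloor> \<le> k * x" by (rule of_int_floor_le)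
      have 2: "k * x < of_int \<lfloor>k * x\<rfloor> + 1" by (rule real_of_int_floor_add_one_gt)
      have eq: "of_int \<lfloor>k * x\<rfloor> / k - x = (of_int \<lfloor>k * x\<rfloor> - k * x) / k"
        using k by (simp add: field_simps)
      have "\<bar>of_int \<lfloor>k * x\<rfloor> - k * x\<bar> \<le> 1" using 1 2 by linarith
      then have le: "\<bar>of_int \<lfloor>k * x\<rfloor> - k * x\<bar> / k \<le> 1 / k"
        using k by (simp add: divide_right_mono)
      have n: "norm (of_int \<lfloor>k * x\<rfloor> / k - x) = \<bar>of_int \<lfloor>k * x\<rfloor> - k * x\<bar> / k"
        unfolding eq real_norm_def abs_divide using k by simp
      have "norm (of_int \<lfloor>k * x\<rfloor> / k - x) \<le> inverse k"
        using n le by (simp add: inverse_eq_divide)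
      then show "norm (of_int \<lfloor>real (Suc m) * x\<rfloor> / real (Suc m) - x) \<le> inverse (real (Suc m))"
        unfolding k_def .
    qed
    show "(\<lambda>m. inverse (real (Suc m))) \<longlonglongrightarrow> 0" by (rule LIMSEQ_inverse_real_of_nat)
  qed
  then show ?thesis by (rule LIM_zero_cancel)
qed

lemma meas_norm_diff:
  fixes f s :: "real \<Rightarrow> 'a::real_normed_vector"
  assumes f: "f \<in> borel_measurable (restrict_space lborel {a..b})"
    and s: "continuous_on {a..b} s" and ab: "a \<le> b"
  shows "(\<lambda>x. norm (f x - s x)) \<in> borel_measurable (restrict_space lborel {a..b})"
proof -
  define M where "M = restrict_space lborel {a..b}"
  define cl where "cl = (\<lambda>q::real. max a (min b q))"
  define u where "u = (\<lambda>(m::nat) x. norm (f x - s (cl (of_int \<lfloor>real (Suc m) * x\<rfloor> / real (Suc m)))))"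
  have fM: "f \<in> borel_measurable M" using f by (simp add: M_def)
  have um: "u m \<in> borel_measurable M" for m
  proof -
    have "(\<lambda>x. (\<lambda>i::int. \<lambda>x. norm (f x - s (cl (of_int i / real (Suc m))))) \<lfloor>real (Suc m) * x\<rfloor> x) \<in> borel_measurable M"
    proof (rule measurable_compose_countable[where f="\<lambda>i x. norm (f x - s (cl (of_int i / real (Suc m))))" and g="\<lambda>x. \<lfloor>real (Suc m) * x\<rfloor>"])
      fix i :: int
      have "(\<lambda>y. norm (y - s (cl (of_int i / real (Suc m))))) \<in> borel_measurable borel"
        by (intro borel_measurable_continuous_onI continuous_intros)
      then show "(\<lambda>x. norm (f x - s (cl (of_int i / real (Suc m))))) \<in> borel_measurable M"
        using measurable_compose[OF fM] by blast
    next
      have "(\<lambda>x. real (Suc m) * x) \<in> borel_measurable borel"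
        by (intro borel_measurable_continuous_onI continuous_intros)
      then have "(\<lambda>x. real (Suc m) * x) \<in> borel_measurable M"
        unfolding M_def by (intro measurable_restrict_space1) simp
      then show "(\<lambda>x. \<lfloor>real (Suc m) * x\<rfloor>) \<in> M \<rightarrow>\<^sub>M count_space UNIV"
        using measurable_compose[OF _ measurable_real_floor] by blast
    qed
    then show ?thesis by (simp add: u_def)
  qed
  have conv: "(\<lambda>m. u m x) \<longlonglongrightarrow> norm (f x - s x)" if x: "x \<in> space M" for x
  proof -
    have xab: "x \<in> {a..b}" using x by (simp add: M_def)
    have clt: "(\<lambda>m. cl (of_int \<lfloor>real (Suc m) * x\<rfloor> / real (Suc m))) \<longlonglongrightarrow> cl x"
      unfolding cl_def by (intro tendsto_intros floor_approx)
    have clx: "cl x = x" using xab by (simp add: cl_def)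
    have clin: "cl q \<in> {a..b}" for q using ab by (simp add: cl_def)
    have "(\<lambda>m. s (cl (of_int \<lfloor>real (Suc m) * x\<rfloor> / real (Suc m)))) \<longlonglongrightarrow> s x"
      by (rule continuous_on_tendsto_compose[OF s clt[unfolded clx] xab]) (rule always_eventually, use clin in blast)
    then show ?thesis unfolding u_def by (intro tendsto_intros)
  qed
  have "(\<lambda>x. norm (f x - s x)) \<in> borel_measurable M"
    by (rule borel_measurable_LIMSEQ_real[OF conv um])
  then show ?thesis by (simp add: M_def)
qed


lemma scaleC_decomp:
  fixes v :: "'a::complex_inner"
  shows "z *\<^sub>C v = Re z *\<^sub>R v + Im z *\<^sub>R (\<i> *\<^sub>C v)"
proof -
  have "z = complex_of_real (Re z) + complex_of_real (Im z) * \<i>" by (simp add: complex_eq_iff)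
  then have "z *\<^sub>C v = complex_of_real (Re z) *\<^sub>C v + (complex_of_real (Im z) * \<i>) *\<^sub>C v"
    by (metis scaleC_add_left)
  also have "(complex_of_real (Im z) * \<i>) *\<^sub>C v = complex_of_real (Im z) *\<^sub>C (\<i> *\<^sub>C v)"
    by (simp only: scaleC_scaleC)
  finally show ?thesis by (simp only: scaleC_of_real)
qed

lemma cont_partial:
  fixes c :: "nat \<Rightarrow> 'a::complex_inner"
  assumes r: "r > 0"
  shows "continuous_on A (\<lambda>\<theta>. \<Sum>u\<in>{1..N}. (inverse (complex_of_real r * cis \<theta>)) ^ u *\<^sub>C c u)"
proof (intro continuous_on_sum)
  fix u
  have "continuous_on A (\<lambda>\<theta>. complex_of_real ((inverse r)^u) * exp (\<i> * complex_of_real (real u * (- \<theta>))))"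
    by (intro continuous_intros)
  then have g: "continuous_on A (\<lambda>\<theta>. (inverse (complex_of_real r * cis \<theta>)) ^ u)"
    unfolding w_pow unfolding cis_conv_exp .
  have "continuous_on A (\<lambda>\<theta>. Re ((inverse (complex_of_real r * cis \<theta>)) ^ u) *\<^sub>R c u
        + Im ((inverse (complex_of_real r * cis \<theta>)) ^ u) *\<^sub>R (\<i> *\<^sub>C c u))"
    by (intro continuous_intros g)
  then show "continuous_on A (\<lambda>\<theta>. (inverse (complex_of_real r * cis \<theta>)) ^ u *\<^sub>C c u)"
    by (simp only: scaleC_decomp[symmetric])
qed

lemma sq_split:
  fixes x y :: "'a::real_normed_vector"
  assumes e: "e > 0"
  shows "(norm x)\<^sup>2 \<le> (1 + e) * (norm y)\<^sup>2 + (1 + 1/e) * (norm (x - y))\<^sup>2"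
proof -
  define a where "a = norm y"
  define b where "b = norm (x - y)"
  have a0: "0 \<le> a" and b0: "0 \<le> b" by (simp_all add: a_def b_def)
  have "norm x \<le> a + b" unfolding a_def b_def using norm_triangle_ineq[of y "x - y"] by simp
  then have 1: "(norm x)\<^sup>2 \<le> (a + b)\<^sup>2" by (simp add: power_mono)
  define d where "d = 1 / e"
  have ed: "e * d = 1" using e by (simp add: d_def)
  have d0: "0 \<le> d" using e by (simp add: d_def)
  have "0 \<le> d * (e * a - b)\<^sup>2" using d0 by simp
  also have "d * (e * a - b)\<^sup>2 = e * a\<^sup>2 - 2 * a * b + d * b\<^sup>2"
    using ed by algebra
  finally have "(a + b)\<^sup>2 \<le> (1 + e) * a\<^sup>2 + (1 + d) * b\<^sup>2"
    by (simp add: power2_eq_square algebra_simps)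
  then have "(a + b)\<^sup>2 \<le> (1 + e) * a\<^sup>2 + (1 + 1/e) * b\<^sup>2" by (simp add: d_def)
  with 1 have "(norm x)\<^sup>2 \<le> (1 + e) * a\<^sup>2 + (1 + 1/e) * b\<^sup>2" by (rule order_trans)
  then show ?thesis by (simp only: a_def b_def)
qed

lemma hk_of_nn:
  fixes g :: "real \<Rightarrow> real"
  assumes A: "A \<in> sets borel"
    and g: "g \<in> borel_measurable (restrict_space lborel A)"
    and nn: "\<And>x. 0 \<le> g x"
    and I: "(\<integral>\<^sup>+x. ennreal (g x) \<partial>(restrict_space lborel A)) = ennreal v" and v: "0 \<le> v"
  shows "(g has_integral v) A"
proof -
  have sets: "A \<inter> space lborel \<in> sets lborel" using A by simp
  define h where "h = (\<lambda>x. indicator A x * g x)"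
  have "(\<lambda>x. indicator A x *\<^sub>R g x) \<in> borel_measurable lborel"
    using g borel_measurable_restrict_space_iff[OF sets] by blast
  then have hm: "h \<in> borel_measurable borel"
    by (simp add: h_def measurable_lborel2)
  have hnn: "\<And>x. 0 \<le> h x" by (simp add: h_def nn)
  have "(\<integral>\<^sup>+x. ennreal (h x) \<partial>lborel) = (\<integral>\<^sup>+x. ennreal (g x) * indicator A x \<partial>lborel)"
    by (intro nn_integral_cong) (simp add: h_def indicator_def)
  also have "\<dots> = ennreal v"
    using I nn_integral_restrict_space[OF sets, of "\<lambda>x. ennreal (g x)"] by simp
  finally have hI: "(h has_integral v) UNIV"
    by (rule nn_integral_has_integral[OF hm hnn _ v])
  have "((\<lambda>x. if x \<in> A then g x else 0) has_integral v) UNIV"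
  proof -
    have "h = (\<lambda>x. if x \<in> A then g x else 0)" by (rule ext) (simp add: h_def split: split_indicator)
    then show ?thesis using hI by simp
  qed
  then show ?thesis by (simp add: has_integral_restrict_UNIV)
qed


lemma cs_trick:
  fixes f :: "real \<Rightarrow> real"
  assumes h1: "(f has_integral J) {0..L}" and h2: "((\<lambda>x. (f x)\<^sup>2) has_integral Q) {0..L}"
    and nn: "\<And>x. 0 \<le> f x" and L: "0 < L"
  shows "J \<le> sqrt (L * Q)"
proof -
  have J0: "0 \<le> J" using h1 by (rule has_integral_nonneg) (simp add: nn)
  have Q0: "0 \<le> Q" using h2 by (rule has_integral_nonneg) simp
  have main: "J \<le> lam / 2 * Q + L * (1 / (2 * lam))" if lam: "lam > 0" for lam
  proof -
    have c: "((\<lambda>x. 1 / (2 * lam)) has_integral L * (1 / (2 * lam))) {0..L}"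
      using has_integral_const_real[of "1 / (2 * lam)" 0 L] L by (simp add: content_real)
    have g: "((\<lambda>x. lam / 2 * (f x)\<^sup>2 + 1 / (2 * lam)) has_integral lam / 2 * Q + L * (1 / (2 * lam))) {0..L}"
      by (intro has_integral_add has_integral_mult_right h2 c)
    show ?thesis
    proof (rule has_integral_le[OF h1 g])
      fix x
      define t where "t = f x"
      define d where "d = 1 / lam"
      have ld: "lam * d = 1" using lam by (simp add: d_def)
      have d0: "0 \<le> d" using lam by (simp add: d_def)
      have "0 \<le> d / 2 * (lam * t - 1)\<^sup>2" using d0 by simp
      also have "d / 2 * (lam * t - 1)\<^sup>2 = lam / 2 * t\<^sup>2 - t + d / 2"
        using ld by algebra
      finally have "t \<le> lam / 2 * t\<^sup>2 + d / 2" by simp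
      then show "f x \<le> lam / 2 * (f x)\<^sup>2 + 1 / (2 * lam)" by (simp add: t_def d_def)
    qed
  qed
  have "J\<^sup>2 \<le> L * Q"
  proof (cases "J = 0")
    case True then show ?thesis using L Q0 by simp
  next
    case False
    then have Jp: "J > 0" using J0 by simp
    show ?thesis
    proof (cases "Q = 0")
      case True
      have "J \<le> (L / J) / 2 * Q + L * (1 / (2 * (L / J)))" using main[of "L / J"] Jp L by simp
      then have "J \<le> J / 2" using True L by simp
      then show ?thesis using Jp by simp
    next
      case False
      then have Qp: "Q > 0" using Q0 by simp
      have "J \<le> (J / Q) / 2 * Q + L * (1 / (2 * (J / Q)))" using main[of "J / Q"] Jp Qp by simp
      also have "\<dots> = J / 2 + L * Q / (2 * J)" using Qp Jp by (simp add: field_simps)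
      finally have "J / 2 \<le> L * Q / (2 * J)" by simp
      then have "J * J \<le> L * Q" using Jp by (simp add: field_simps)
      then show ?thesis by (simp add: power2_eq_square)
    qed
  qed
  then show ?thesis by (rule real_le_rsqrt)
qed

lemma L2_nn_bound:
  fixes c :: "nat \<Rightarrow> 'a::complex_inner" and F :: "complex \<Rightarrow> 'a"
  assumes r: "0 < r" and H: "in_H2minus r c" and L: "circle_L2_sum r c F"
  shows "(\<integral>\<^sup>+\<theta>. ennreal ((norm (F (complex_of_real r * cis \<theta>)))\<^sup>2) \<partial>(restrict_space lborel {0..2*pi}))
           \<le> ennreal (2 * pi * (\<Sum>u. (1/r)^(2*Suc u) * (norm (c (Suc u)))\<^sup>2))"
proof -
  define A where "A = {0..2*pi::real}"
  define M where "M = restrict_space lborel A"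
  define Ft where "Ft = (\<lambda>\<theta>. F (complex_of_real r * cis \<theta>))"
  define S where "S = (\<lambda>N \<theta>. \<Sum>u\<in>{1..N}. (inverse (complex_of_real r * cis \<theta>)) ^ u *\<^sub>C c u)"
  define P where "P = (\<lambda>N. \<Sum>u\<in>{1..N}. (1/r)^(2*u) * (norm (c u))\<^sup>2)"
  define Sf where "Sf = (\<Sum>u. (1/r)^(2*Suc u) * (norm (c (Suc u)))\<^sup>2)"
  define X where "X = (\<integral>\<^sup>+\<theta>. ennreal ((norm (Ft \<theta>))\<^sup>2) \<partial>M)"
  define E where "E = (\<lambda>N. \<integral>\<^sup>+\<theta>. ennreal ((norm (Ft \<theta> - S N \<theta>))\<^sup>2) \<partial>M)"
  have sets: "A \<inter> space lborel \<in> sets lborel" by (simp add: A_def)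
  have Fm: "Ft \<in> borel_measurable M"
    using L by (simp add: circle_L2_sum_def M_def A_def Ft_def)
  have E0: "E \<longlonglongrightarrow> 0"
    using L unfolding circle_L2_sum_def
    by (simp add: E_def M_def A_def Ft_def S_def nn_integral_restrict_space)
  have summ: "summable (\<lambda>u. (1/r)^(2*Suc u) * (norm (c (Suc u)))\<^sup>2)"
    using H by (simp add: in_H2minus_def)
  have PS: "P N \<le> Sf" for N
  proof -
    have "P N = (\<Sum>u<N. (1/r)^(2*Suc u) * (norm (c (Suc u)))\<^sup>2)"
      unfolding P_def using sum.atLeast1_atMost_eq[of "\<lambda>u. (1/r)^(2*u) * (norm (c u))\<^sup>2" N] by simp
    also have "\<dots> \<le> Sf" unfolding Sf_def by (rule sum_le_suminf[OF summ]) auto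
    finally show ?thesis .
  qed
  have Sf0: "0 \<le> Sf" unfolding Sf_def by (rule suminf_nonneg[OF summ]) simp
  have SN: "(\<integral>\<^sup>+\<theta>. ennreal ((norm (S N \<theta>))\<^sup>2) \<partial>M) = ennreal (2*pi*P N)" for N
  proof -
    have "((\<lambda>\<theta>. (norm (S N \<theta>))\<^sup>2) has_integral 2*pi*P N) A"
      unfolding S_def P_def A_def by (rule parseval_partial[OF r])
    from nn_integral_has_integral_lebesgue'[OF _ this]
    have "(\<integral>\<^sup>+\<theta>. ennreal ((norm (S N \<theta>))\<^sup>2) * indicator A \<theta> \<partial>lborel) = ennreal (2*pi*P N)" by simp
    then show ?thesis unfolding M_def using nn_integral_restrict_space[OF sets] by simp
  qed
  have em: "(\<lambda>\<theta>. norm (Ft \<theta> - S N \<theta>)) \<in> borel_measurable M" for N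
    using meas_norm_diff[OF Fm[unfolded M_def A_def] cont_partial[OF r, where A="{0..2*pi}" and N=N and c=c]]
    by (simp add: M_def A_def S_def)
  have Snm: "(\<lambda>\<theta>. norm (S N \<theta>)) \<in> borel_measurable M" for N
  proof -
    have "(\<lambda>\<theta>. 0::'a) \<in> borel_measurable (restrict_space lborel {0..2*pi})" by simp
    from meas_norm_diff[OF this cont_partial[OF r, where A="{0..2*pi}" and N=N and c=c]]
    show ?thesis by (simp add: M_def A_def S_def)
  qed
  have key: "X \<le> ennreal (2*pi*Sf + e*(2*pi*Sf + 1 + e))" if e: "e > 0" for e
  proof -
    have "\<forall>\<^sub>F N in sequentially. E N < ennreal (e\<^sup>2)"
      using order_tendstoD(2)[OF E0, of "ennreal (e\<^sup>2)"] e by simp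
    then obtain N where EN: "E N < ennreal (e\<^sup>2)"
      by (auto simp: eventually_sequentially)
    have m1: "(\<lambda>\<theta>. ennreal ((1+e) * (norm (S N \<theta>))\<^sup>2)) \<in> borel_measurable M"
      using Snm[of N] by measurable
    have m2: "(\<lambda>\<theta>. ennreal ((1+1/e) * (norm (Ft \<theta> - S N \<theta>))\<^sup>2)) \<in> borel_measurable M"
      using em[of N] by measurable
    have "X \<le> (\<integral>\<^sup>+\<theta>. ennreal ((1+e) * (norm (S N \<theta>))\<^sup>2) + ennreal ((1+1/e) * (norm (Ft \<theta> - S N \<theta>))\<^sup>2) \<partial>M)"
      unfolding X_def
    proof (rule nn_integral_mono)
      fix \<theta>
      have "(norm (Ft \<theta>))\<^sup>2 \<le> (1+e) * (norm (S N \<theta>))\<^sup>2 + (1+1/e) * (norm (Ft \<theta> - S N \<theta>))\<^sup>2"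
        by (rule sq_split[OF e])
      then have "ennreal ((norm (Ft \<theta>))\<^sup>2) \<le> ennreal ((1+e) * (norm (S N \<theta>))\<^sup>2 + (1+1/e) * (norm (Ft \<theta> - S N \<theta>))\<^sup>2)"
        by (rule ennreal_leI)
      also have "\<dots> = ennreal ((1+e) * (norm (S N \<theta>))\<^sup>2) + ennreal ((1+1/e) * (norm (Ft \<theta> - S N \<theta>))\<^sup>2)"
        by (rule ennreal_plus) (use e in simp_all)
      finally show "ennreal ((norm (Ft \<theta>))\<^sup>2) \<le> ennreal ((1+e) * (norm (S N \<theta>))\<^sup>2) + ennreal ((1+1/e) * (norm (Ft \<theta> - S N \<theta>))\<^sup>2)" .
    qed
    also have "\<dots> = (\<integral>\<^sup>+\<theta>. ennreal ((1+e) * (norm (S N \<theta>))\<^sup>2) \<partial>M) + (\<integral>\<^sup>+\<theta>. ennreal ((1+1/e) * (norm (Ft \<theta> - S N \<theta>))\<^sup>2) \<partial>M)"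
      by (rule nn_integral_add[OF m1 m2])
    also have "(\<integral>\<^sup>+\<theta>. ennreal ((1+e) * (norm (S N \<theta>))\<^sup>2) \<partial>M) = ennreal (1+e) * ennreal (2*pi*P N)"
    proof -
      have "(\<integral>\<^sup>+\<theta>. ennreal ((1+e) * (norm (S N \<theta>))\<^sup>2) \<partial>M) = (\<integral>\<^sup>+\<theta>. ennreal (1+e) * ennreal ((norm (S N \<theta>))\<^sup>2) \<partial>M)"
        using e by (intro nn_integral_cong) (simp add: ennreal_mult)
      also have "\<dots> = ennreal (1+e) * (\<integral>\<^sup>+\<theta>. ennreal ((norm (S N \<theta>))\<^sup>2) \<partial>M)"
        by (rule nn_integral_cmult) (use Snm[of N] in measurable)
      finally show ?thesis by (simp add: SN)
    qed
    also have "(\<integral>\<^sup>+\<theta>. ennreal ((1+1/e) * (norm (Ft \<theta> - S N \<theta>))\<^sup>2) \<partial>M) = ennreal (1+1/e) * E N"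
    proof -
      have "(\<integral>\<^sup>+\<theta>. ennreal ((1+1/e) * (norm (Ft \<theta> - S N \<theta>))\<^sup>2) \<partial>M) = (\<integral>\<^sup>+\<theta>. ennreal (1+1/e) * ennreal ((norm (Ft \<theta> - S N \<theta>))\<^sup>2) \<partial>M)"
        using e by (intro nn_integral_cong) (simp add: ennreal_mult)
      also have "\<dots> = ennreal (1+1/e) * E N"
        unfolding E_def by (rule nn_integral_cmult) (use em[of N] in measurable)
      finally show ?thesis .
    qed
    also have "ennreal (1+e) * ennreal (2*pi*P N) + ennreal (1+1/e) * E N
        \<le> ennreal (1+e) * ennreal (2*pi*Sf) + ennreal (1+1/e) * ennreal (e\<^sup>2)"
    proof -
      have a1: "ennreal (2*pi*P N) \<le> ennreal (2*pi*Sf)"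
        using PS[of N] by (intro ennreal_leI) simp
      have a2: "E N \<le> ennreal (e\<^sup>2)" using EN by (rule less_imp_le)
      show ?thesis
        by (rule add_mono[OF mult_left_mono[OF a1] mult_left_mono[OF a2]]) (rule zero_le)+
    qed
    also have "\<dots> = ennreal ((1+e) * (2*pi*Sf) + (1+1/e) * e\<^sup>2)"
    proof -
      have b1: "ennreal (1+e) * ennreal (2*pi*Sf) = ennreal ((1+e) * (2*pi*Sf))"
        by (rule ennreal_mult[symmetric]) (use e Sf0 in simp_all)
      have b2: "ennreal (1+1/e) * ennreal (e\<^sup>2) = ennreal ((1+1/e) * e\<^sup>2)"
        by (rule ennreal_mult[symmetric]) (use e in simp_all)
      have b3: "ennreal ((1+e) * (2*pi*Sf)) + ennreal ((1+1/e) * e\<^sup>2) = ennreal ((1+e) * (2*pi*Sf) + (1+1/e) * e\<^sup>2)"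
        by (rule ennreal_plus[symmetric]) (use e Sf0 in simp_all)
      show ?thesis unfolding b1 b2 b3 ..
    qed
    also have "(1+e) * (2*pi*Sf) + (1+1/e) * e\<^sup>2 = 2*pi*Sf + e*(2*pi*Sf + 1 + e)"
      using e by (simp add: field_simps power2_eq_square)
    finally show ?thesis .
  qed
  have "X \<le> ennreal (2*pi*Sf)"
  proof (rule ennreal_le_epsilon)
    fix d :: real assume d: "0 < d"
    define e where "e = min 1 (d / (2*pi*Sf + 2))"
    have den: "0 < 2*pi*Sf + 2" using Sf0 by (simp add: add_nonneg_pos)
    have e0: "0 < e" using d den by (simp add: e_def)
    have e1: "e \<le> 1" by (simp add: e_def)
    have e2: "e * (2*pi*Sf + 2) \<le> d"
    proof -
      have "e \<le> d / (2*pi*Sf + 2)" by (simp add: e_def)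
      then show ?thesis using den by (simp add: field_simps)
    qed
    have "e*(2*pi*Sf + 1 + e) \<le> e * (2*pi*Sf + 2)"
      using e0 e1 by (intro mult_left_mono) simp_all
    then have le: "2*pi*Sf + e*(2*pi*Sf + 1 + e) \<le> 2*pi*Sf + d" using e2 by simp
    have "X \<le> ennreal (2*pi*Sf + e*(2*pi*Sf + 1 + e))" by (rule key[OF e0])
    also have "\<dots> \<le> ennreal (2*pi*Sf + d)" using le by (rule ennreal_leI)
    also have "\<dots> = ennreal (2*pi*Sf) + ennreal d" using Sf0 d by (simp add: ennreal_plus)
    finally show "X \<le> ennreal (2*pi*Sf) + ennreal d" .
  qed
  then show ?thesis by (simp add: X_def Ft_def M_def A_def Sf_def)
qed


lemma L2_bound:
  fixes c :: "nat \<Rightarrow> 'a::complex_inner" and F :: "complex \<Rightarrow> 'a"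
  assumes r: "0 < r" and H: "in_H2minus r c" and L: "circle_L2_sum r c F"
  shows "\<exists>J. ((\<lambda>\<theta>. norm (F (complex_of_real r * cis \<theta>))) has_integral J) {0..2*pi}
            \<and> J \<le> 2*pi * sqrt (\<Sum>u. (1/r)^(2*Suc u) * (norm (c (Suc u)))\<^sup>2)"
proof -
  define A where "A = {0..2*pi::real}"
  define M where "M = restrict_space lborel A"
  define Ft where "Ft = (\<lambda>\<theta>. F (complex_of_real r * cis \<theta>))"
  define Sf where "Sf = (\<Sum>u. (1/r)^(2*Suc u) * (norm (c (Suc u)))\<^sup>2)"
  define X where "X = (\<integral>\<^sup>+\<theta>. ennreal ((norm (Ft \<theta>))\<^sup>2) \<partial>M)"
  define Y where "Y = (\<integral>\<^sup>+\<theta>. ennreal (norm (Ft \<theta>)) \<partial>M)"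
  have sets: "A \<inter> space lborel \<in> sets lborel" by (simp add: A_def)
  have Ab: "A \<in> sets borel" by (simp add: A_def)
  have summ: "summable (\<lambda>u. (1/r)^(2*Suc u) * (norm (c (Suc u)))\<^sup>2)"
    using H by (simp add: in_H2minus_def)
  have Sf0: "0 \<le> Sf" unfolding Sf_def by (rule suminf_nonneg[OF summ]) simp
  have Fm: "Ft \<in> borel_measurable M"
    using L by (simp add: circle_L2_sum_def M_def A_def Ft_def)
  have Fnm: "(\<lambda>\<theta>. norm (Ft \<theta>)) \<in> borel_measurable M"
    using measurable_compose[OF Fm borel_measurable_norm] by simp
  have XB: "X \<le> ennreal (2*pi*Sf)"
    using L2_nn_bound[OF r H L] by (simp add: X_def M_def A_def Ft_def Sf_def)
  define x2 where "x2 = enn2real X"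
  have Xt: "X < top" by (rule le_less_trans[OF XB ennreal_less_top])
  have Xe: "X = ennreal x2" unfolding x2_def using Xt by (simp add: ennreal_enn2real)
  have x20: "0 \<le> x2" by (simp add: x2_def)
  have x2le: "x2 \<le> 2*pi*Sf" using XB Xe Sf0 by (simp add: ennreal_le_iff)
  have h2: "((\<lambda>\<theta>. (norm (Ft \<theta>))\<^sup>2) has_integral x2) A"
  proof (rule hk_of_nn[OF Ab])
    show "(\<lambda>\<theta>. (norm (Ft \<theta>))\<^sup>2) \<in> borel_measurable (restrict_space lborel A)"
      using Fnm unfolding M_def by measurable
    show "(\<integral>\<^sup>+x. ennreal ((norm (Ft x))\<^sup>2) \<partial>restrict_space lborel A) = ennreal x2"
      using Xe by (simp add: X_def M_def)
  qed (simp_all add: x20)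
  have spM: "space M = A" by (simp add: M_def space_restrict_space)
  have emM: "emeasure M A = ennreal (2*pi)"
    unfolding M_def using emeasure_restrict_space[OF sets, of A] by (simp add: A_def)
  have m2: "(\<lambda>\<theta>. ennreal ((norm (Ft \<theta>))\<^sup>2)) \<in> borel_measurable M" using Fnm by measurable
  have YB: "Y \<le> X + ennreal (2*pi)"
  proof -
    have "Y \<le> (\<integral>\<^sup>+\<theta>. ennreal ((norm (Ft \<theta>))\<^sup>2) + 1 \<partial>M)"
      unfolding Y_def
    proof (rule nn_integral_mono)
      fix \<theta>
      define t where "t = norm (Ft \<theta>)"
      have t0: "0 \<le> t" by (simp add: t_def)
      have "0 \<le> (t - 1)\<^sup>2" by simp
      then have "t \<le> t\<^sup>2 + 1" using t0 by (simp add: power2_eq_square algebra_simps)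
      then have "ennreal t \<le> ennreal (t\<^sup>2 + 1)" by (rule ennreal_leI)
      also have "\<dots> = ennreal (t\<^sup>2) + 1" by (simp add: ennreal_plus)
      finally show "ennreal (norm (Ft \<theta>)) \<le> ennreal ((norm (Ft \<theta>))\<^sup>2) + 1" by (simp add: t_def)
    qed
    also have "\<dots> = X + (\<integral>\<^sup>+\<theta>. 1 \<partial>M)"
      unfolding X_def by (rule nn_integral_add[OF m2]) simp
    also have "(\<integral>\<^sup>+\<theta>. 1 \<partial>M) = ennreal (2*pi)"
      by (simp add: nn_integral_const spM emM)
    finally show ?thesis .
  qed
  have "X + ennreal (2*pi) = ennreal (x2 + 2*pi)" unfolding Xe by (rule ennreal_plus[symmetric]) (simp_all add: x20)
  then have Yt: "Y < top" using YB ennreal_less_top[of "x2 + 2*pi"] by (metis le_less_trans)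
  define y1 where "y1 = enn2real Y"
  have Ye: "Y = ennreal y1" unfolding y1_def using Yt by (simp add: ennreal_enn2real)
  have h1: "((\<lambda>\<theta>. norm (Ft \<theta>)) has_integral y1) A"
  proof (rule hk_of_nn[OF Ab])
    show "(\<lambda>\<theta>. norm (Ft \<theta>)) \<in> borel_measurable (restrict_space lborel A)"
      using Fnm unfolding M_def .
    show "(\<integral>\<^sup>+x. ennreal (norm (Ft x)) \<partial>restrict_space lborel A) = ennreal y1"
      using Ye by (simp add: Y_def M_def)
  qed (simp_all add: y1_def)
  have "y1 \<le> sqrt (2*pi * x2)"
    by (rule cs_trick[OF h1[unfolded A_def] h2[unfolded A_def]]) simp_all
  also have "\<dots> \<le> sqrt ((2*pi)\<^sup>2 * Sf)"
    using x2le by (intro real_sqrt_le_mono) (simp add: power2_eq_square mult_ac)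
  also have "\<dots> = 2*pi * sqrt Sf"
    by (simp add: real_sqrt_mult)
  finally have "y1 \<le> 2*pi * sqrt Sf" .
  with h1 show ?thesis unfolding A_def Ft_def Sf_def by blast
qed


lemma contour_bound:
  fixes h :: "complex \<Rightarrow> complex" and \<phi> :: "real \<Rightarrow> real"
  assumes r: "0 < r" and phi: "(\<phi> has_integral I) {0..2*pi}"
    and hb: "\<And>\<theta>. \<theta> \<in> {0..2*pi} \<Longrightarrow> cmod (h (complex_of_real r * cis \<theta>)) \<le> \<phi> \<theta>"
  shows "cmod (contour_integral (circlepath 0 r) h) \<le> r * I"
proof -
  have I0: "0 \<le> I"
    using phi by (rule has_integral_nonneg) (use hb in \<open>meson norm_ge_zero order_trans\<close>)
  show ?thesis
  proof (cases "h contour_integrable_on circlepath 0 r")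
    case False
    then show ?thesis using I0 r by (simp add: not_integrable_contour_integral)
  next
    case True
    let ?g = "\<lambda>t. h (circlepath 0 r t) * vector_derivative (circlepath 0 r) (at t within {0..1})"
    have ci: "(?g has_integral contour_integral (circlepath 0 r) h) {0..1}"
      using has_contour_integral_integral[OF True] unfolding has_contour_integral_def .
    have pi0: "(2 * pi) \<noteq> 0" by simp
    have st: "((\<lambda>t. \<phi> (2 * pi * t)) has_integral (1 / \<bar>2 * pi\<bar>) *\<^sub>R I) ((\<lambda>x. x / (2 * pi)) ` {0..2*pi})"
      by (rule has_integral_stretch_real[OF phi pi0])
    have img: "(\<lambda>x. x / (2 * pi)) ` {0..2*pi} = {0..1}"
      by (subst image_divide_atLeastAtMost) simp_all
    have st2: "((\<lambda>t. \<phi> (2 * pi * t)) has_integral I / (2 * pi)) {0..1}"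
      using st unfolding img by simp
    have ps: "((\<lambda>t. (2 * pi * r) * \<phi> (2 * pi * t)) has_integral (2 * pi * r) * (I / (2 * pi))) {0..1}"
      by (rule has_integral_mult_right[OF st2])
    have "norm (integral {0..1} ?g) \<le> integral {0..1} (\<lambda>t. (2 * pi * r) * \<phi> (2 * pi * t))"
    proof (rule integral_norm_bound_integral)
      show "?g integrable_on {0..1}" using ci by blast
      show "(\<lambda>t. (2 * pi * r) * \<phi> (2 * pi * t)) integrable_on {0..1}" using ps by blast
      fix t :: real assume t: "t \<in> {0..1}"
      have "circlepath 0 r t = complex_of_real r * cis (2 * pi * t)"
        by (simp add: circlepath_def part_circlepath_def linepath_def cis_conv_exp algebra_simps)
      moreover have "vector_derivative (circlepath 0 r) (at t within {0..1})
          = complex_of_real (2 * pi) * \<i> * complex_of_real r * exp (2 * complex_of_real pi * \<i> * complex_of_real t)"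
        using t by (simp add: vector_derivative_circlepath01)
      moreover have "cmod (complex_of_real (2 * pi) * \<i> * complex_of_real r * exp (2 * complex_of_real pi * \<i> * complex_of_real t)) = 2 * pi * r"
        using r by (simp add: norm_mult)
      moreover have "2 * pi * t \<in> {0..2*pi}" using t by auto
      ultimately show "norm (?g t) \<le> (2 * pi * r) * \<phi> (2 * pi * t)"
        using hb[of "2 * pi * t"] r by (simp add: norm_mult mult.commute)
    qed
    also have "\<dots> = (2 * pi * r) * (I / (2 * pi))" using ps by (rule integral_unique)
    also have "\<dots> = r * I" by simp
    finally show ?thesis using integral_unique[OF ci] by simp
  qed
qed


theorem proposition3p3:
  fixes \<Phi> :: "complex \<Rightarrow> 'a::complex_inner \<Rightarrow> 'a"
    and r r0 R M :: real
    and f g :: "nat \<Rightarrow> 'a"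
    and F G :: "complex \<Rightarrow> 'a"
  assumes "0 < r" and "r < r0" and "r0 < 1" and "R = 1 / r"
    and "\<forall>z\<in>cball 0 r0. bounded_clinear (\<Phi> z)"
    and "op_holomorphic_on (ball 0 r0) \<Phi>"
    and "op_continuous_on (cball 0 r0) \<Phi>"
    and "M = (SUP z\<in>cball 0 r0. onorm (\<Phi> z))"
    and "in_H2minus r f" and "in_H2minus r g"
    and "circle_L2_sum r f F" and "circle_L2_sum r g G"
  shows "cmod (form_bracket \<Phi> r F G)
           \<le> 2 * M * r0\<^sup>2 / (1 - r0\<^sup>2)\<^sup>2
             * sqrt (\<Sum>u. R ^ (2 * Suc u) * (norm (f (Suc u)))\<^sup>2)
             * sqrt (\<Sum>u. R ^ (2 * Suc u) * (norm (g (Suc u)))\<^sup>2)"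
proof -
  have r: "0 < r" and rr0: "r < r0" and r01: "r0 < 1" and R: "R = 1 / r"
    using assms by simp_all
  have bl: "\<forall>z\<in>cball 0 r0. bounded_clinear (\<Phi> z)" using assms by simp
  have cont: "op_continuous_on (cball 0 r0) \<Phi>" using assms by simp
  have Mdef: "M = (SUP z\<in>cball 0 r0. onorm (\<Phi> z))" using assms by simp
  have bdd: "bdd_above ((\<lambda>z. onorm (\<Phi> z)) ` cball 0 r0)"
    by (rule onorm_cont_bdd[OF cont compact_cball bl])
  have Mz: "onorm (\<Phi> z) \<le> M" if "z \<in> cball 0 r0" for z
    unfolding Mdef by (rule cSUP_upper[OF that bdd])
  have r00: "0 < r0" using r rr0 by simp
  have M0: "0 \<le> M"
  proof -
    have "(0::complex) \<in> cball 0 r0" using r00 by simp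
    then have "0 \<le> onorm (\<Phi> 0)" using bl bclin_linear onorm_pos_le by blast
    also have "\<dots> \<le> M" using Mz r00 by simp
    finally show ?thesis .
  qed
  define K where "K = 2 * M / (1 - r\<^sup>2)"
  have r2: "r\<^sup>2 < 1" using r rr0 r01 power_strict_mono[of r 1 2] by simp
  have r1: "r < 1" using rr0 r01 by simp
  have K0: "0 \<le> K" unfolding K_def using M0 r2 by simp
  have onc: "complex_of_real r * cis \<theta> \<in> cball 0 r0" for \<theta>
    using r rr0 by (simp add: norm_mult)
  have cmc: "cmod (complex_of_real r * cis \<theta>) = r" for \<theta>
    using r by (simp add: norm_mult)
  define Sf where "Sf = (\<Sum>u. (1/r)^(2*Suc u) * (norm (f (Suc u)))\<^sup>2)"
  define Sg where "Sg = (\<Sum>u. (1/r)^(2*Suc u) * (norm (g (Suc u)))\<^sup>2)"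
  have Sf0: "0 \<le> Sf" unfolding Sf_def
    by (rule suminf_nonneg) (use assms in \<open>simp_all add: in_H2minus_def\<close>)
  have Sg0: "0 \<le> Sg" unfolding Sg_def
    by (rule suminf_nonneg) (use assms in \<open>simp_all add: in_H2minus_def\<close>)
  obtain JF where hF: "((\<lambda>\<theta>. norm (F (complex_of_real r * cis \<theta>))) has_integral JF) {0..2*pi}"
      and JFb: "JF \<le> 2*pi * sqrt Sf"
    using L2_bound[OF r, of f F] assms unfolding Sf_def by blast
  obtain JG where hG: "((\<lambda>\<theta>. norm (G (complex_of_real r * cis \<theta>))) has_integral JG) {0..2*pi}"
      and JGb: "JG \<le> 2*pi * sqrt Sg"
    using L2_bound[OF r, of g G] assms unfolding Sg_def by blast
  have JF0: "0 \<le> JF" using hF by (rule has_integral_nonneg) simp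
  have JG0: "0 \<le> JG" using hG by (rule has_integral_nonneg) simp
  define I where "I = (\<lambda>b. contour_integral (circlepath 0 r) (\<lambda>a. cinner (C_kernel \<Phi> a b (F a)) (G b)))"
  have Ib: "cmod (I b) \<le> r * (K * norm (G b) * JF)" if b: "b \<in> cball 0 r0" "cmod b = r" for b
    unfolding I_def
  proof (rule contour_bound[OF r])
    show "((\<lambda>\<theta>. K * norm (G b) * norm (F (complex_of_real r * cis \<theta>))) has_integral K * norm (G b) * JF) {0..2*pi}"
      by (rule has_integral_mult_right[OF hF])
    fix \<theta> :: real
    let ?a = "complex_of_real r * cis \<theta>"
    have "cmod (cinner (C_kernel \<Phi> ?a b (F ?a)) (G b)) \<le> 2 * M / (1 - r\<^sup>2) * norm (F ?a) * norm (G b)"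
      by (rule kernel_bound[OF _ _ Mz[OF onc] Mz[OF b(1)] cmc b(2)]) (use bl onc b r r1 in auto)
    then show "cmod (cinner (C_kernel \<Phi> ?a b (F ?a)) (G b)) \<le> K * norm (G b) * norm (F ?a)"
      by (simp add: K_def mult_ac)
  qed
  have outer: "cmod (contour_integral (circlepath 0 r) (\<lambda>b. cnj (I b))) \<le> r * (r * K * JF * JG)"
  proof (rule contour_bound[OF r])
    show "((\<lambda>\<theta>. r * K * JF * norm (G (complex_of_real r * cis \<theta>))) has_integral r * K * JF * JG) {0..2*pi}"
      by (rule has_integral_mult_right[OF hG])
    fix \<theta> :: real
    have "cmod (cnj (I (complex_of_real r * cis \<theta>))) \<le> r * (K * norm (G (complex_of_real r * cis \<theta>)) * JF)"
      using Ib[OF onc cmc] by simp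
    then show "cmod (cnj (I (complex_of_real r * cis \<theta>))) \<le> r * K * JF * norm (G (complex_of_real r * cis \<theta>))"
      by (simp add: mult_ac)
  qed
  have fb: "form_bracket \<Phi> r F G = 1 / (4 * complex_of_real (pi\<^sup>2)) * cnj (contour_integral (circlepath 0 r) (\<lambda>b. cnj (I b)))"
    unfolding form_bracket_def I_def ..
  have "cmod (form_bracket \<Phi> r F G) = cmod (contour_integral (circlepath 0 r) (\<lambda>b. cnj (I b))) / (4 * pi\<^sup>2)"
    unfolding fb by (simp add: norm_mult norm_divide norm_power)
  also have "\<dots> \<le> r * (r * K * JF * JG) / (4 * pi\<^sup>2)"
    by (rule divide_right_mono[OF outer]) simp
  also have "\<dots> = (r\<^sup>2 * K) * (JF * JG) / (4 * pi\<^sup>2)" by (simp add: power2_eq_square mult_ac)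
  also have "\<dots> \<le> (r\<^sup>2 * K) * ((2*pi * sqrt Sf) * (2*pi * sqrt Sg)) / (4 * pi\<^sup>2)"
    using K0 JF0 JG0 JFb JGb by (intro divide_right_mono mult_left_mono mult_mono) simp_all
  also have "\<dots> = (r\<^sup>2 * K) * (sqrt Sf * sqrt Sg)"
    by (simp add: power2_eq_square field_simps)
  also have "\<dots> \<le> (2 * M * r0\<^sup>2 / (1 - r0\<^sup>2)\<^sup>2) * (sqrt Sf * sqrt Sg)"
  proof (rule mult_right_mono)
    show "0 \<le> sqrt Sf * sqrt Sg" using Sf0 Sg0 by simp
    have r0sq: "r0\<^sup>2 < 1" using r00 r01 power_strict_mono[of r0 1 2] by simp
    have a: "r\<^sup>2 \<le> r0\<^sup>2" using r rr0 by (simp add: power_mono)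
    have d1: "0 < 1 - r0\<^sup>2" using r0sq by simp
    have d2: "1 - r0\<^sup>2 \<le> 1 - r\<^sup>2" using a by simp
    have d3: "(1 - r0\<^sup>2)\<^sup>2 \<le> 1 - r0\<^sup>2"
      using d1 r00 by (simp add: power2_eq_square mult_le_cancel_left1)
    have "r\<^sup>2 / (1 - r\<^sup>2) \<le> r0\<^sup>2 / (1 - r0\<^sup>2)"
      by (rule frac_le) (use a d1 d2 in simp_all)
    also have "\<dots> \<le> r0\<^sup>2 / (1 - r0\<^sup>2)\<^sup>2"
      by (rule divide_left_mono) (use d1 d3 in simp_all)
    finally have q: "r\<^sup>2 / (1 - r\<^sup>2) \<le> r0\<^sup>2 / (1 - r0\<^sup>2)\<^sup>2" .
    have "r\<^sup>2 * K = 2 * M * (r\<^sup>2 / (1 - r\<^sup>2))" by (simp add: K_def)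
    also have "\<dots> \<le> 2 * M * (r0\<^sup>2 / (1 - r0\<^sup>2)\<^sup>2)"
      by (rule mult_left_mono[OF q]) (use M0 in simp)
    also have "\<dots> = 2 * M * r0\<^sup>2 / (1 - r0\<^sup>2)\<^sup>2" by simp
    finally show "r\<^sup>2 * K \<le> 2 * M * r0\<^sup>2 / (1 - r0\<^sup>2)\<^sup>2" .
  qed
  also have "\<dots> = 2 * M * r0\<^sup>2 / (1 - r0\<^sup>2)\<^sup>2
             * sqrt (\<Sum>u. R ^ (2 * Suc u) * (norm (f (Suc u)))\<^sup>2)
             * sqrt (\<Sum>u. R ^ (2 * Suc u) * (norm (g (Suc u)))\<^sup>2)"
    by (simp add: Sf_def Sg_def R mult.assoc)
  finally show ?thesis .
qed

end
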